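(* Let $h\colon\mathbb{R}^d\to\mathbb{R}$ be a Lipschitz continuous convex function, let $\lambda>0$, and let $f(x)=h(x)+\frac{\lambda}{2}\|x\|^2$, with minimizer $x^*$ over $\mathbb{R}^d$ and minimum value $f^*$. Let $g_h(x;\xi)$ be a stochastic subgradient oracle for $h$, i.e. $\mathbb{E}_{\xi\sim D}\,g_h(x;\xi)\in\partial h(x)$, satisfying $\mathbb{E}_\xi\|g_h(x;\xi)\|^2\le L^2$ for all $x\in\mathbb{R}^d$. Consider the iteration $$x_{k+1}=x_k-\alpha_k\big(g_h(x_k;\xi_k)+\lambda x_k\big),\qquad \alpha_k=\frac{2}{\lambda(k+2)+\frac{36\lambda}{k+1}},$$ from $x_0\in\mathbb{R}^d$ with $\xi_k\sim D$ i.i.d. Then for every $T\ge0$, $$\mathbb{E}_{\xi_{0\dots T}}\left[f\left(\frac{2}{(T+1)(T+2)}\sum_{k=0}^T(k+1)x_k\right)-f^*\right]\le\frac{24L^2}{\lambda(T+2)}+\frac{36\lambda\|x_0-x^*\|^2}{(T+1)(T+2)}.$$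
   Context: $\partial h(x)=\{g: h(y)\ge h(x)+g^T(y-x)\ \forall y\in\mathbb{R}^d\}$; $\mathbb{E}_{\xi_{0\dots T}}$ denotes expectation over the i.i.d. samples $\xi_0,\dots,\xi_T$. *)

theory Defs
  imports "HOL-Analysis.Analysis" "HOL-Probability.Probability"
begin

definition subdifferential :: "('a::real_inner \<Rightarrow> real) \<Rightarrow> 'a \<Rightarrow> 'a set" where
  "subdifferential h x = {g. \<forall>y. h y \<ge> h x + inner g (y - x)}"

definition step_size :: "real \<Rightarrow> nat \<Rightarrow> real" where
  "step_size lam k = 2 / (lam * (real k + 2) + 36 * lam / (real k + 1))"

fun sgd_iter :: "('a::real_vector \<Rightarrow> 'b \<Rightarrow> 'a) \<Rightarrow> real \<Rightarrow> 'a \<Rightarrow> (nat \<Rightarrow> 'b) \<Rightarrow> nat \<Rightarrow> 'a" where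
  "sgd_iter g lam x0 xi 0 = x0"
| "sgd_iter g lam x0 xi (Suc k) =
     sgd_iter g lam x0 xi k - step_size lam k *\<^sub>R (g (sgd_iter g lam x0 xi k) (xi k) + lam *\<^sub>R sgd_iter g lam x0 xi k)"

end

theory Submission
  imports Defs
begin


lemma sq_pt:
  fixes w v :: "'a::real_inner"
  shows "(norm (w - c *\<^sub>R v))\<^sup>2 = (norm w)\<^sup>2 - 2*c*(w \<bullet> v) + c\<^sup>2 * (norm v)\<^sup>2"
  unfolding power2_norm_eq_inner by (simp add: inner_diff_left inner_diff_right inner_commute algebra_simps power2_eq_square)

lemma sq_expand:
  fixes G :: "'b \<Rightarrow> 'a::euclidean_space"
  assumes D: "prob_space D" and iG: "integrable D G" and iG2: "integrable D (\<lambda>y. (norm (G y))\<^sup>2)"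
  shows "integrable D (\<lambda>y. (norm (w - c *\<^sub>R G y))\<^sup>2)"
    and "(\<integral>y. (norm (w - c *\<^sub>R G y))\<^sup>2 \<partial>D) = (norm w)\<^sup>2 - 2*c*(w \<bullet> (\<integral>y. G y \<partial>D)) + c\<^sup>2 * (\<integral>y. (norm (G y))\<^sup>2 \<partial>D)"
proof -
  interpret prob_space D by (rule D)
  have i1: "integrable D (\<lambda>y. w \<bullet> G y)" using iG by simp
  show "integrable D (\<lambda>y. (norm (w - c *\<^sub>R G y))\<^sup>2)"
    unfolding sq_pt using i1 iG2 by simp
  have "(\<integral>y. (norm (w - c *\<^sub>R G y))\<^sup>2 \<partial>D) = (\<integral>y. (norm w)\<^sup>2 - 2*c*(w \<bullet> G y) + c\<^sup>2 * (norm (G y))\<^sup>2 \<partial>D)"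
    unfolding sq_pt ..
  also have "\<dots> = (norm w)\<^sup>2 - 2*c*(\<integral>y. w \<bullet> G y \<partial>D) + c\<^sup>2 * (\<integral>y. (norm (G y))\<^sup>2 \<partial>D)"
    using i1 iG2 by (simp add: prob_space)
  also have "(\<integral>y. w \<bullet> G y \<partial>D) = w \<bullet> (\<integral>y. G y \<partial>D)" using iG by simp
  finally show "(\<integral>y. (norm (w - c *\<^sub>R G y))\<^sup>2 \<partial>D) = (norm w)\<^sup>2 - 2*c*(w \<bullet> (\<integral>y. G y \<partial>D)) + c\<^sup>2 * (\<integral>y. (norm (G y))\<^sup>2 \<partial>D)" .
qed

lemma mean_facts:
  fixes G :: "'b \<Rightarrow> 'a::euclidean_space"
  assumes D: "prob_space D" and mG: "G \<in> borel_measurable D"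
    and m2: "(\<integral>\<^sup>+ y. ennreal ((norm (G y))\<^sup>2) \<partial>D) \<le> ennreal (L\<^sup>2)"
  shows "integrable D (\<lambda>y. (norm (G y))\<^sup>2)" and "integrable D G"
    and "(\<integral>y. (norm (G y))\<^sup>2 \<partial>D) \<le> L\<^sup>2" and "norm (\<integral>y. G y \<partial>D) \<le> \<bar>L\<bar>"
proof -
  interpret prob_space D by (rule D)
  have fin: "(\<integral>\<^sup>+ y. ennreal (norm ((norm (G y))\<^sup>2)) \<partial>D) < \<infinity>"
    using m2 by (simp add: le_less_trans)
  show i2: "integrable D (\<lambda>y. (norm (G y))\<^sup>2)"
    by (rule integrableI_bounded) (use mG fin in auto)
  have "integrable D (\<lambda>y. norm (G y))"
    by (rule square_integrable_imp_integrable) (use mG i2 in auto)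
  then show iG: "integrable D G" using mG integrable_norm_iff by blast
  have "ennreal (\<integral>y. (norm (G y))\<^sup>2 \<partial>D) = (\<integral>\<^sup>+ y. ennreal ((norm (G y))\<^sup>2) \<partial>D)"
    by (rule nn_integral_eq_integral[symmetric]) (use i2 in auto)
  also have "\<dots> \<le> ennreal (L\<^sup>2)" by (rule m2)
  finally show E: "(\<integral>y. (norm (G y))\<^sup>2 \<partial>D) \<le> L\<^sup>2"
    by (simp add: ennreal_le_iff)
  define s where "s = (\<integral>y. G y \<partial>D)"
  have "0 \<le> (\<integral>y. (norm (s - 1 *\<^sub>R G y))\<^sup>2 \<partial>D)" by simp
  also have "\<dots> = (norm s)\<^sup>2 - 2*1*(s \<bullet> s) + 1\<^sup>2 * (\<integral>y. (norm (G y))\<^sup>2 \<partial>D)"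
    using sq_expand(2)[OF D iG i2, of s 1] by (simp only: s_def[symmetric])
  finally have "(norm s)\<^sup>2 \<le> L\<^sup>2" using E by (simp add: power2_norm_eq_inner)
  then show "norm (\<integral>y. G y \<partial>D) \<le> \<bar>L\<bar>" unfolding s_def
    using abs_le_square_iff[of "norm (\<integral>y. G y \<partial>D)" L] by simp
qed

lemma one_step_real:
  fixes x u s :: "'a::euclidean_space"
  assumes sg: "h u \<ge> h x + s \<bullet> (u - x)"
    and sn: "norm s \<le> \<bar>L\<bar>" and us: "norm (lam *\<^sub>R u) \<le> \<bar>L\<bar>" and E: "E \<le> L\<^sup>2"
    and lam: "lam > 0" and b0: "0 \<le> \<beta>" "\<beta> \<le> 1" and al: "\<alpha> = \<beta>/lam"
  shows "(norm ((1-\<beta>) *\<^sub>R x - u))\<^sup>2 - 2*\<alpha>*(((1-\<beta>) *\<^sub>R x - u) \<bullet> s) + \<alpha>\<^sup>2 * E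
     \<le> (1-\<beta>) * (norm (x-u))\<^sup>2 - 2*\<alpha>*(1-\<beta>)*((h x + lam/2*(norm x)\<^sup>2) - (h u + lam/2*(norm u)\<^sup>2)) + 4*\<alpha>\<^sup>2*L\<^sup>2"
proof -
  define e where "e = x - u"
  have xe: "x = e + u" using e_def by simp
  have b: "\<beta> = \<alpha> * lam" using al lam by simp
  have a0: "\<alpha> \<ge> 0" using al lam b0 by simp
  have w: "(1-\<beta>) *\<^sub>R x - u = (1-\<beta>) *\<^sub>R e - \<beta> *\<^sub>R u" using xe by (simp add: algebra_simps)
  have nw: "(norm ((1-\<beta>) *\<^sub>R x - u))\<^sup>2 = (1-\<beta>)\<^sup>2 * (e \<bullet> e) - 2*\<beta>*(1-\<beta>)*(e \<bullet> u) + \<beta>\<^sup>2*(u \<bullet> u)"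
    unfolding w power2_norm_eq_inner
    by (simp add: inner_diff_left inner_diff_right inner_commute algebra_simps power2_eq_square)
  have ws: "((1-\<beta>) *\<^sub>R x - u) \<bullet> s = (1-\<beta>)*(e \<bullet> s) - \<beta>*(u \<bullet> s)"
    unfolding w by (simp add: inner_diff_left)
  have nx: "(norm x)\<^sup>2 = e \<bullet> e + 2*(e \<bullet> u) + u \<bullet> u"
    unfolding xe power2_norm_eq_inner by (simp add: inner_add_left inner_add_right inner_commute)
  have ne: "(norm (x-u))\<^sup>2 = e \<bullet> e" unfolding e_def power2_norm_eq_inner ..
  have nu: "(norm u)\<^sup>2 = u \<bullet> u" unfolding power2_norm_eq_inner ..
  have es: "e \<bullet> s \<ge> h x - h u" using sg unfolding e_def by (simp add: inner_diff_left inner_diff_right inner_commute)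
  have cs: "\<bar>(lam *\<^sub>R u) \<bullet> s\<bar> \<le> L\<^sup>2"
  proof -
    have "\<bar>(lam *\<^sub>R u) \<bullet> s\<bar> \<le> norm (lam *\<^sub>R u) * norm s" by (rule Cauchy_Schwarz_ineq2)
    also have "\<dots> \<le> \<bar>L\<bar> * \<bar>L\<bar>" by (rule mult_mono) (use us sn in auto)
    finally show ?thesis by (simp add: power2_eq_square)
  qed
  have uu: "lam\<^sup>2 * (u \<bullet> u) \<le> L\<^sup>2"
  proof -
    have "(norm (lam *\<^sub>R u))\<^sup>2 \<le> \<bar>L\<bar>\<^sup>2" by (rule power_mono) (use us in auto)
    moreover have "(norm (lam *\<^sub>R u))\<^sup>2 = lam\<^sup>2 * (norm u)\<^sup>2" by (simp add: power_mult_distrib)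
    ultimately show ?thesis using nu by simp
  qed
  have A: "0 \<le> 2*\<alpha>*(1-\<beta>)*(e \<bullet> s - (h x - h u))" using a0 b0 es by simp
  have B: "0 \<le> \<alpha>\<^sup>2*(4*L\<^sup>2 - E - lam\<^sup>2 * (u \<bullet> u) - 2*lam*(u \<bullet> s))"
    using cs uu E by (intro mult_nonneg_nonneg) (auto simp: abs_le_iff)
  have "(1-\<beta>) * (norm (x-u))\<^sup>2 - 2*\<alpha>*(1-\<beta>)*((h x + lam/2*(norm x)\<^sup>2) - (h u + lam/2*(norm u)\<^sup>2)) + 4*\<alpha>\<^sup>2*L\<^sup>2
     - ((norm ((1-\<beta>) *\<^sub>R x - u))\<^sup>2 - 2*\<alpha>*(((1-\<beta>) *\<^sub>R x - u) \<bullet> s) + \<alpha>\<^sup>2 * E)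
     = 2*\<alpha>*(1-\<beta>)*(e \<bullet> s - (h x - h u)) + \<alpha>\<^sup>2*(4*L\<^sup>2 - E - lam\<^sup>2 * (u \<bullet> u) - 2*lam*(u \<bullet> s))"
    unfolding nw ws nx ne nu unfolding b by (simp add: algebra_simps power2_eq_square)
  then show ?thesis using A B by linarith
qed

lemma one_step:
  fixes h :: "'a::euclidean_space \<Rightarrow> real" and G :: "'b \<Rightarrow> 'a"
  assumes D: "prob_space D" and mG: "G \<in> borel_measurable D"
    and m2: "(\<integral>\<^sup>+ y. ennreal ((norm (G y))\<^sup>2) \<partial>D) \<le> ennreal (L\<^sup>2)"
    and sub: "(\<integral>y. G y \<partial>D) \<in> subdifferential h x"
    and us: "norm (lam *\<^sub>R u) \<le> \<bar>L\<bar>" and lam: "lam > 0" and b0: "0 \<le> \<beta>" "\<beta> \<le> 1" and al: "\<alpha> = \<beta>/lam"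
  shows "\<exists>I. (\<integral>\<^sup>+ y. ennreal ((norm (x - \<alpha> *\<^sub>R (G y + lam *\<^sub>R x) - u))\<^sup>2) \<partial>D) = ennreal I \<and> 0 \<le> I \<and>
     I \<le> (1-\<beta>) * (norm (x-u))\<^sup>2 - 2*\<alpha>*(1-\<beta>)*((h x + lam/2*(norm x)\<^sup>2) - (h u + lam/2*(norm u)\<^sup>2)) + 4*\<alpha>\<^sup>2*L\<^sup>2"
proof -
  note mf = mean_facts[OF D mG m2]
  define w where "w = (1-\<beta>) *\<^sub>R x - u"
  have b: "\<alpha> * lam = \<beta>" using al lam by simp
  have pt: "x - \<alpha> *\<^sub>R (G y + lam *\<^sub>R x) - u = w - \<alpha> *\<^sub>R G y" for y
    unfolding w_def by (simp add: algebra_simps b flip: b)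
  define I where "I = (\<integral>y. (norm (w - \<alpha> *\<^sub>R G y))\<^sup>2 \<partial>D)"
  have "(\<integral>\<^sup>+ y. ennreal ((norm (x - \<alpha> *\<^sub>R (G y + lam *\<^sub>R x) - u))\<^sup>2) \<partial>D)
      = (\<integral>\<^sup>+ y. ennreal ((norm (w - \<alpha> *\<^sub>R G y))\<^sup>2) \<partial>D)" unfolding pt ..
  also have "\<dots> = ennreal I" unfolding I_def
    by (rule nn_integral_eq_integral) (use sq_expand(1)[OF D mf(2) mf(1)] in auto)
  finally have 1: "(\<integral>\<^sup>+ y. ennreal ((norm (x - \<alpha> *\<^sub>R (G y + lam *\<^sub>R x) - u))\<^sup>2) \<partial>D) = ennreal I" .
  have 2: "0 \<le> I" unfolding I_def by simp
  have "I = (norm w)\<^sup>2 - 2*\<alpha>*(w \<bullet> (\<integral>y. G y \<partial>D)) + \<alpha>\<^sup>2 * (\<integral>y. (norm (G y))\<^sup>2 \<partial>D)"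
    unfolding I_def using sq_expand(2)[OF D mf(2) mf(1)] by simp
  also have "\<dots> \<le> (1-\<beta>) * (norm (x-u))\<^sup>2 - 2*\<alpha>*(1-\<beta>)*((h x + lam/2*(norm x)\<^sup>2) - (h u + lam/2*(norm u)\<^sup>2)) + 4*\<alpha>\<^sup>2*L\<^sup>2"
    unfolding w_def
    by (rule one_step_real[OF _ mf(4) us mf(3) lam b0 al])
       (use sub in \<open>auto simp: subdifferential_def\<close>)
  finally show ?thesis using 1 2 by blast
qed

lemma xstar_bound:
  fixes h :: "'a::euclidean_space \<Rightarrow> real"
  assumes sub: "\<And>x. \<exists>s \<in> subdifferential h x. norm s \<le> M"
    and opt: "\<forall>y. h u + lam/2*(norm u)\<^sup>2 \<le> h y + lam/2*(norm y)\<^sup>2" and lam: "lam > 0"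
  shows "norm (lam *\<^sub>R u) \<le> M"
proof (rule ccontr)
  assume "\<not> norm (lam *\<^sub>R u) \<le> M"
  hence gt: "lam * norm u > M" using lam by simp
  obtain s0 where "s0 \<in> subdifferential h u" "norm s0 \<le> M" using sub by blast
  hence M0: "M \<ge> 0" using norm_ge_zero order_trans by blast
  have n0: "norm u > 0" using gt M0 by (cases "norm u = 0") auto
  define q where "q = M / (lam * norm u)"
  have q0: "0 \<le> q" and q1: "q < 1" using gt M0 lam n0 by (auto simp: q_def divide_simps)
  have Mq: "M = q * lam * norm u" using lam n0 by (simp add: q_def)
  define y where "y = q *\<^sub>R u"
  obtain s where s: "s \<in> subdifferential h y" "norm s \<le> M" using sub by blast
  have "h u \<ge> h y + s \<bullet> (u - y)" using s(1) by (auto simp: subdifferential_def)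
  moreover have "s \<bullet> (u - y) = (1-q) * (s \<bullet> u)" by (simp add: y_def algebra_simps inner_diff_right)
  moreover have "s \<bullet> u \<ge> - (M * norm u)"
  proof -
    have "\<bar>s \<bullet> u\<bar> \<le> norm s * norm u" by (rule Cauchy_Schwarz_ineq2)
    also have "\<dots> \<le> M * norm u" using s(2) by (simp add: mult_right_mono)
    finally show ?thesis by linarith
  qed
  moreover have "(1-q) * (s \<bullet> u) \<ge> (1-q) * (- (M * norm u))"
    by (rule mult_left_mono) (use q1 calculation in auto)
  ultimately have hy: "h y \<le> h u + (1-q) * (M * norm u)" by simp
  have ny: "(norm y)\<^sup>2 = q\<^sup>2 * (norm u)\<^sup>2" using q0 by (simp add: y_def power_mult_distrib)
  have "h u + lam/2*(norm u)\<^sup>2 \<le> h y + lam/2*(norm y)\<^sup>2" using opt by blast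
  hence "lam/2*(norm u)\<^sup>2 \<le> (1-q) * (q * lam * norm u * norm u) + lam/2*(q\<^sup>2 * (norm u)\<^sup>2)"
    using hy ny Mq by (simp add: mult.assoc)
  hence "lam * (norm u)\<^sup>2 * (1/2) \<le> lam * (norm u)\<^sup>2 * (q - q\<^sup>2/2)"
    by (simp add: algebra_simps power2_eq_square)
  hence "1/2 \<le> q - q\<^sup>2/2" using lam n0 by (simp add: mult_le_cancel_left_pos)
  hence "(1-q)\<^sup>2 \<le> 0" by (simp add: power2_eq_square algebra_simps)
  hence "q = 1" by simp
  with q1 show False by simp
qed

lemma sgd_local:
  "(\<And>i. i < k \<Longrightarrow> xi i = xi' i) \<Longrightarrow> sgd_iter g lam x0 xi k = sgd_iter g lam x0 xi' k"
  by (induction k) auto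

lemma sgd_meas:
  fixes g :: "'a::euclidean_space \<Rightarrow> 'b \<Rightarrow> 'a"
  assumes g_meas: "(\<lambda>(x, \<xi>). g x \<xi>) \<in> borel_measurable (borel \<Otimes>\<^sub>M D)"
  shows "{..<k} \<subseteq> I \<Longrightarrow> (\<lambda>xi. sgd_iter g lam x0 xi k) \<in> borel_measurable (PiM I (\<lambda>_. D))"
proof (induction k)
  case 0
  then show ?case by simp
next
  case (Suc k)
  have kI: "k \<in> I" and sub: "{..<k} \<subseteq> I" using Suc.prems by auto
  have IH: "(\<lambda>xi. sgd_iter g lam x0 xi k) \<in> borel_measurable (PiM I (\<lambda>_. D))" using Suc.IH sub by blast
  have m1: "(\<lambda>xi. (sgd_iter g lam x0 xi k, xi k)) \<in> measurable (PiM I (\<lambda>_. D)) (borel \<Otimes>\<^sub>M D)"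
    by (intro measurable_Pair IH measurable_component_singleton kI)
  have m2: "(\<lambda>xi. g (sgd_iter g lam x0 xi k) (xi k)) \<in> borel_measurable (PiM I (\<lambda>_. D))"
    using measurable_compose[OF m1 g_meas] by simp
  show ?case using IH m2 by simp
qed



definition Fobj :: "('a::real_normed_vector \<Rightarrow> real) \<Rightarrow> real \<Rightarrow> 'a \<Rightarrow> 'a \<Rightarrow> real" where
  "Fobj h lam u x = (h x + lam/2*(norm x)\<^sup>2) - (h u + lam/2*(norm u)\<^sup>2)"

definition Qpot :: "('a::real_normed_vector \<Rightarrow> real) \<Rightarrow> ('a \<Rightarrow> 'b \<Rightarrow> 'a) \<Rightarrow> real \<Rightarrow> 'a \<Rightarrow> 'a \<Rightarrow> nat \<Rightarrow> (nat \<Rightarrow> 'b) \<Rightarrow> real" where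
  "Qpot h g lam x0 u n xi = (\<Sum>j<n. 2*(real j+1) * Fobj h lam u (sgd_iter g lam x0 xi j))
      + lam * ((real n)\<^sup>2 + real n + 36) * (norm (sgd_iter g lam x0 xi n - u))\<^sup>2"

lemma Q_meas:
  fixes g :: "'a::euclidean_space \<Rightarrow> 'b \<Rightarrow> 'a" and h :: "'a \<Rightarrow> real"
  assumes g_meas: "(\<lambda>(x, \<xi>). g x \<xi>) \<in> borel_measurable (borel \<Otimes>\<^sub>M D)"
    and hm: "h \<in> borel_measurable borel" and sub: "{..<n} \<subseteq> I"
  shows "Qpot h g lam x0 u n \<in> borel_measurable (PiM I (\<lambda>_. D))"
proof -
  have mX: "(\<lambda>xi. sgd_iter g lam x0 xi j) \<in> borel_measurable (PiM I (\<lambda>_. D))" if "j \<le> n" for j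
    by (rule sgd_meas[OF g_meas]) (use sub that in auto)
  have mh: "(\<lambda>xi. h (sgd_iter g lam x0 xi j)) \<in> borel_measurable (PiM I (\<lambda>_. D))" if "j \<le> n" for j
    using measurable_compose[OF mX[OF that] hm] by simp
  have mF: "(\<lambda>xi. Fobj h lam u (sgd_iter g lam x0 xi j)) \<in> borel_measurable (PiM I (\<lambda>_. D))" if "j \<le> n" for j
    unfolding Fobj_def using mh[OF that] mX[OF that] by measurable
  show ?thesis unfolding Qpot_def[abs_def]
    using mF mX by (intro borel_measurable_add borel_measurable_sum borel_measurable_times) auto
qed

lemma alg_id:
  fixes lam P p K ee F L :: real
  assumes "lam \<noteq> 0" "P \<noteq> 0" "P = p + K"
  shows "lam*P*((1-K/P)*ee - 2*(K/P/lam)*(1-K/P)*F + 4*(K/P/lam)\<^sup>2*L\<^sup>2) = lam*p*ee - (2*K*p/P)*F + (4*K\<^sup>2/(lam*P))*L\<^sup>2"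
proof -
  have e1: "1 - K/P = p/P" using assms by (simp add: field_simps)
  show ?thesis unfolding e1 using assms(1,2) by (simp add: field_simps power2_eq_square)
qed

lemma step_real:
  fixes n :: nat and lam L I ee F :: real
  assumes lam: "lam > 0" and F0: "0 \<le> F" and I0: "0 \<le> I"
    and Ile: "I \<le> (1-\<beta>) * ee - 2*\<alpha>*(1-\<beta>)*F + 4*\<alpha>\<^sup>2*L\<^sup>2"
    and b: "\<beta> = 2*(real n+1) / ((real n+1)\<^sup>2 + (real n+1) + 36)" and al: "\<alpha> = \<beta>/lam"
  shows "2*(real n+1)*F + lam * ((real n+1)\<^sup>2 + (real n+1) + 36) * I
     \<le> lam * ((real n)\<^sup>2 + real n + 36) * ee + 16*L\<^sup>2/lam"
proof -
  define P where "P = (real n+1)\<^sup>2 + (real n+1) + 36"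
  define p where "p = (real n)\<^sup>2 + real n + 36"
  have P0: "P > 0" unfolding P_def by (simp add: add_pos_nonneg)
  have Pp: "P = p + 2*(real n+1)" unfolding P_def p_def by (simp add: power2_eq_square algebra_simps)
  have p0: "p > 0" unfolding p_def using zero_le_power2[of "real n"] of_nat_0_le_iff[of n] by linarith
  have Bpos: "lam * P \<ge> 0" using lam P0 by simp
  have "lam * P * I \<le> lam * P * ((1-\<beta>) * ee - 2*\<alpha>*(1-\<beta>)*F + 4*\<alpha>\<^sup>2*L\<^sup>2)"
    by (rule mult_left_mono[OF Ile Bpos])
  also have "\<dots> = lam * p * ee - (2*(2*(real n+1))*p/P) * F + (4*(2*(real n+1))\<^sup>2/(lam*P)) * L\<^sup>2"
    unfolding al b P_def[symmetric] using lam P0 Pp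
    by (intro alg_id) auto
  also have "\<dots> = lam * p * ee - (4*(real n+1)*p/P) * F + (16*(real n+1)\<^sup>2/(lam*P)) * L\<^sup>2"
    by (simp add: power2_eq_square algebra_simps)
  finally have 1: "lam * P * I \<le> lam * p * ee - (4*(real n+1)*p/P) * F + (16*(real n+1)\<^sup>2/(lam*P)) * L\<^sup>2" .
  have 2: "4*(real n+1)*p/P \<ge> 2*(real n+1)"
  proof -
    have sq: "0 \<le> (real n - 1/2)\<^sup>2" by simp
    have "(real n - 1/2)\<^sup>2 = (real n)\<^sup>2 - real n + 1/4" by (simp add: power2_eq_square algebra_simps)
    hence q: "0 \<le> (real n)\<^sup>2 - real n + 34" using sq by linarith
    have "P \<le> 2*p" unfolding Pp p_def using q by (simp add: algebra_simps)
    hence "2*(real n+1) * P \<le> 2*(real n+1) * (2*p)" by (intro mult_left_mono) auto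
    hence "2*(real n+1) * P \<le> 4*(real n+1)*p" by (simp add: algebra_simps)
    thus ?thesis using P0 by (simp add: field_simps)
  qed
  have 3: "(16*(real n+1)\<^sup>2/(lam*P)) * L\<^sup>2 \<le> 16*L\<^sup>2/lam"
  proof -
    have "(real n+1)\<^sup>2 \<le> P" unfolding P_def by simp
    hence "(real n+1)\<^sup>2/P \<le> 1" using P0 by simp
    hence "16*L\<^sup>2/lam * ((real n+1)\<^sup>2/P) \<le> 16*L\<^sup>2/lam * 1"
      by (rule mult_left_mono) (use lam in simp)
    thus ?thesis by (simp add: field_simps)
  qed
  have 4: "(4*(real n+1)*p/P) * F \<ge> 2*(real n+1) * F" using 2 F0 by (rule mult_right_mono)
  show ?thesis using 1 3 4 unfolding P_def[symmetric] p_def[symmetric] by linarith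
qed



lemma main_ind:
  fixes h :: "'a::euclidean_space \<Rightarrow> real" and g :: "'a \<Rightarrow> 'b \<Rightarrow> 'a" and D :: "'b measure"
  assumes D: "prob_space D"
    and g_meas: "(\<lambda>(x, \<xi>). g x \<xi>) \<in> borel_measurable (borel \<Otimes>\<^sub>M D)"
    and hm: "h \<in> borel_measurable borel"
    and g_unb: "\<forall>x. (\<integral>\<xi>. g x \<xi> \<partial>D) \<in> subdifferential h x"
    and g2: "\<forall>x. (\<integral>\<^sup>+ \<xi>. ennreal ((norm (g x \<xi>))\<^sup>2) \<partial>D) \<le> ennreal (L\<^sup>2)"
    and us: "norm (lam *\<^sub>R u) \<le> \<bar>L\<bar>" and lam: "lam > 0"
    and opt: "\<forall>y. h u + lam/2*(norm u)\<^sup>2 \<le> h y + lam/2*(norm y)\<^sup>2"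
  shows "(\<integral>\<^sup>+xi. ennreal (Qpot h g lam x0 u n xi) \<partial>PiM {..<n} (\<lambda>_. D))
          \<le> ennreal (36*lam*(norm (x0-u))\<^sup>2 + real n * (16*L\<^sup>2/lam))"
proof (induction n)
  case 0
  have ps: "prob_space (PiM ({}::nat set) (\<lambda>_. D))" by (rule prob_space_PiM) (use D in auto)
  have e: "{..<0::nat} = {}" by simp
  have "(\<integral>\<^sup>+xi. ennreal (Qpot h g lam x0 u 0 xi) \<partial>PiM ({}::nat set) (\<lambda>_. D))
      = (\<integral>\<^sup>+xi. ennreal (36*lam*(norm (x0-u))\<^sup>2) \<partial>PiM ({}::nat set) (\<lambda>_. D))"
    by (rule nn_integral_cong) (simp add: Qpot_def mult.commute)
  also have "\<dots> = ennreal (36*lam*(norm (x0-u))\<^sup>2)"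
    using prob_space.emeasure_space_1[OF ps] by simp
  finally show ?case unfolding e by simp
next
  case (Suc n)
  interpret P: product_sigma_finite "\<lambda>_. D"
    unfolding product_sigma_finite_def using D prob_space_imp_sigma_finite by auto
  let ?M = "PiM {..<n} (\<lambda>_. D)"
  have psM: "prob_space ?M" by (rule prob_space_PiM) (use D in auto)
  let ?X = "\<lambda>xi j. sgd_iter g lam x0 xi j"
  define S where "S xi = (\<Sum>j<n. 2*(real j+1) * Fobj h lam u (?X xi j))" for xi
  define N where "N = 16*L\<^sup>2/lam"
  have F0: "0 \<le> Fobj h lam u x" for x using opt by (simp add: Fobj_def)
  have S0: "0 \<le> S xi" for xi unfolding S_def using F0 by (intro sum_nonneg) simp
  have inner: "(\<integral>\<^sup>+y. ennreal (Qpot h g lam x0 u (Suc n) (xi(n := y))) \<partial>D)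
      \<le> ennreal (Qpot h g lam x0 u n xi) + ennreal N" for xi
  proof -
    define x where "x = ?X xi n"
    define \<beta> where "\<beta> = 2*(real n+1) / ((real n+1)\<^sup>2 + (real n+1) + 36)"
    define \<alpha> where "\<alpha> = step_size lam n"
    define B where "B = lam * ((real n+1)\<^sup>2 + (real n+1) + 36)"
    have B0: "0 \<le> B" unfolding B_def using lam by (simp add: add_nonneg_nonneg)
    have al: "\<alpha> = \<beta>/lam" unfolding \<alpha>_def \<beta>_def step_size_def using lam
      by (simp add: field_simps power2_eq_square)
    have Pp: "0 < (real n+1)\<^sup>2 + (real n+1) + 36" by (simp add: add_pos_nonneg)
    have Pl: "2*(real n+1) \<le> (real n+1)\<^sup>2 + (real n+1) + 36"
    proof -
      define t where "t = real n + 1"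
      have t1: "1 \<le> t" unfolding t_def by simp
      have "t * 1 \<le> t * t" using t1 by (intro mult_left_mono) auto
      thus ?thesis unfolding t_def[symmetric] by (simp add: power2_eq_square)
    qed
    have b0: "0 \<le> \<beta>" "\<beta> \<le> 1" unfolding \<beta>_def using Pp Pl
      by (simp_all add: divide_le_eq_1)
    have loc: "?X (xi(n := y)) j = ?X xi j" if "j \<le> n" for j y
      by (rule sgd_local) (use that in auto)
    have Sloc: "S (xi(n := y)) = S xi" for y unfolding S_def by (intro sum.cong) (auto simp: loc)
    have Qeq: "Qpot h g lam x0 u (Suc n) (xi(n := y))
       = (S xi + 2*(real n+1) * Fobj h lam u x) + B * (norm (x - \<alpha> *\<^sub>R (g x y + lam *\<^sub>R x) - u))\<^sup>2" for y
      unfolding Qpot_def B_def x_def \<alpha>_def using Sloc[of y] loc[of n y]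
      by (simp add: S_def)
    have mG: "g x \<in> borel_measurable D"
    proof -
      have "Pair x \<in> measurable D (borel \<Otimes>\<^sub>M D)" by simp
      from measurable_compose[OF this g_meas] show ?thesis by simp
    qed
    obtain I where I: "(\<integral>\<^sup>+ y. ennreal ((norm (x - \<alpha> *\<^sub>R (g x y + lam *\<^sub>R x) - u))\<^sup>2) \<partial>D) = ennreal I"
      "0 \<le> I" "I \<le> (1-\<beta>) * (norm (x-u))\<^sup>2 - 2*\<alpha>*(1-\<beta>)*Fobj h lam u x + 4*\<alpha>\<^sup>2*L\<^sup>2"
      using one_step[OF D mG g2[rule_format] g_unb[rule_format] us lam b0 al] unfolding Fobj_def by blast
    have "(\<integral>\<^sup>+y. ennreal (Qpot h g lam x0 u (Suc n) (xi(n := y))) \<partial>D)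
        = (\<integral>\<^sup>+y. ennreal (S xi + 2*(real n+1) * Fobj h lam u x) + ennreal B * ennreal ((norm (x - \<alpha> *\<^sub>R (g x y + lam *\<^sub>R x) - u))\<^sup>2) \<partial>D)"
      unfolding Qeq using S0 F0 B0 by (intro nn_integral_cong) (simp add: ennreal_plus ennreal_mult)
    also have "\<dots> = ennreal (S xi + 2*(real n+1) * Fobj h lam u x) + ennreal B * (\<integral>\<^sup>+ y. ennreal ((norm (x - \<alpha> *\<^sub>R (g x y + lam *\<^sub>R x) - u))\<^sup>2) \<partial>D)"
      using mG prob_space.emeasure_space_1[OF D]
      by (subst nn_integral_add) (auto simp: nn_integral_cmult)
    also have "\<dots> = ennreal (S xi + 2*(real n+1) * Fobj h lam u x + B * I)"
      unfolding I(1) using S0 F0 B0 I(2) by (simp add: ennreal_plus ennreal_mult)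
    also have "\<dots> \<le> ennreal (Qpot h g lam x0 u n xi + N)"
    proof (rule ennreal_leI)
      have "2*(real n+1)*Fobj h lam u x + lam * ((real n+1)\<^sup>2 + (real n+1) + 36) * I
         \<le> lam * ((real n)\<^sup>2 + real n + 36) * (norm (x-u))\<^sup>2 + 16*L\<^sup>2/lam"
        by (rule step_real[OF lam F0 I(2) I(3) \<beta>_def al])
      then show "S xi + 2*(real n+1) * Fobj h lam u x + B * I \<le> Qpot h g lam x0 u n xi + N"
        unfolding Qpot_def S_def B_def N_def x_def by simp
    qed
    also have "\<dots> = ennreal (Qpot h g lam x0 u n xi) + ennreal N"
    proof (rule ennreal_plus)
      show "0 \<le> Qpot h g lam x0 u n xi" using S0[of xi] lam unfolding Qpot_def S_def
        by (intro add_nonneg_nonneg mult_nonneg_nonneg) auto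
      show "0 \<le> N" unfolding N_def using lam by simp
    qed
    finally show ?thesis .
  qed
  have mQ: "(\<lambda>xi. ennreal (Qpot h g lam x0 u (Suc n) xi)) \<in> borel_measurable (PiM (insert n {..<n}) (\<lambda>_. D))"
  proof -
    have "Qpot h g lam x0 u (Suc n) \<in> borel_measurable (PiM (insert n {..<n}) (\<lambda>_. D))"
      by (rule Q_meas[OF g_meas hm]) auto
    then show ?thesis by measurable
  qed
  have mQn: "Qpot h g lam x0 u n \<in> borel_measurable ?M"
    by (rule Q_meas[OF g_meas hm]) auto
  have "(\<integral>\<^sup>+xi. ennreal (Qpot h g lam x0 u (Suc n) xi) \<partial>PiM {..<Suc n} (\<lambda>_. D))
      = (\<integral>\<^sup>+xi. (\<integral>\<^sup>+y. ennreal (Qpot h g lam x0 u (Suc n) (xi(n := y))) \<partial>D) \<partial>?M)"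
    unfolding lessThan_Suc by (rule P.product_nn_integral_insert) (use mQ in auto)
  also have "\<dots> \<le> (\<integral>\<^sup>+xi. ennreal (Qpot h g lam x0 u n xi) + ennreal N \<partial>?M)"
    by (rule nn_integral_mono) (rule inner)
  also have "\<dots> = (\<integral>\<^sup>+xi. ennreal (Qpot h g lam x0 u n xi) \<partial>?M) + ennreal N"
    using mQn prob_space.emeasure_space_1[OF psM] by (subst nn_integral_add) auto
  also have "\<dots> \<le> ennreal (36*lam*(norm (x0-u))\<^sup>2 + real n * (16*L\<^sup>2/lam)) + ennreal N"
    using Suc.IH by (rule add_right_mono)
  also have "\<dots> = ennreal (36*lam*(norm (x0-u))\<^sup>2 + real n * (16*L\<^sup>2/lam) + N)"
    by (rule ennreal_plus[symmetric]) (use lam in \<open>auto simp: N_def intro!: add_nonneg_nonneg\<close>)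
  also have "36*lam*(norm (x0-u))\<^sup>2 + real n * (16*L\<^sup>2/lam) + N = 36*lam*(norm (x0-u))\<^sup>2 + real (Suc n) * (16*L\<^sup>2/lam)"
    by (simp add: N_def algebra_simps add_divide_distrib)
  finally show ?case .
qed



lemma convex_norm2: "convex_on UNIV (\<lambda>x::'a::real_normed_vector. (norm x)\<^sup>2)"
proof (rule convex_onI)
  fix t :: real and x y :: 'a
  assume t: "t > 0" "t < 1"
  have "norm ((1 - t) *\<^sub>R x + t *\<^sub>R y) \<le> (1-t) * norm x + t * norm y"
    using t norm_triangle_ineq[of "(1 - t) *\<^sub>R x" "t *\<^sub>R y"] by simp
  hence "(norm ((1 - t) *\<^sub>R x + t *\<^sub>R y))\<^sup>2 \<le> ((1-t) * norm x + t * norm y)\<^sup>2"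
    by (rule power_mono) simp
  also have "\<dots> = (1-t) * (norm x)\<^sup>2 + t * (norm y)\<^sup>2 - t*(1-t)*(norm x - norm y)\<^sup>2"
    by (simp add: power2_eq_square algebra_simps)
  also have "\<dots> \<le> (1-t) * (norm x)\<^sup>2 + t * (norm y)\<^sup>2"
    using t by simp
  finally show "(norm ((1 - t) *\<^sub>R x + t *\<^sub>R y))\<^sup>2 \<le> (1-t) * (norm x)\<^sup>2 + t * (norm y)\<^sup>2" .
qed simp

lemma sum_k1: "(\<Sum>k\<le>T. real k + 1) = (real T + 1) * (real T + 2) / 2"
  by (induction T) (simp_all add: field_simps)



theorem corollary2p5:
  fixes h :: "'a::euclidean_space \<Rightarrow> real"
    and D :: "'b measure"
    and g :: "'a \<Rightarrow> 'b \<Rightarrow> 'a"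
    and lam L C fstar :: real
    and xstar x0 :: 'a
    and T :: nat
  assumes lip: "C-lipschitz_on UNIV h"
    and cvx: "convex_on UNIV h"
    and lam_pos: "lam > 0"
    and xstar_min: "\<forall>y. h xstar + lam / 2 * (norm xstar)\<^sup>2 \<le> h y + lam / 2 * (norm y)\<^sup>2"
    and fstar_def: "fstar = h xstar + lam / 2 * (norm xstar)\<^sup>2"
    and D_prob: "prob_space D"
    and g_meas: "(\<lambda>(x, \<xi>). g x \<xi>) \<in> borel_measurable (borel \<Otimes>\<^sub>M D)"
    and g_unbiased: "\<forall>x. (\<integral>\<xi>. g x \<xi> \<partial>D) \<in> subdifferential h x"
    and g_second_moment: "\<forall>x. (\<integral>\<^sup>+ \<xi>. ennreal ((norm (g x \<xi>))\<^sup>2) \<partial>D) \<le> ennreal (L\<^sup>2)"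
  shows "(\<integral>\<^sup>+ xi. ennreal (
            (let xbar = (2 / ((real T + 1) * (real T + 2))) *\<^sub>R
                        (\<Sum>k\<le>T. (real k + 1) *\<^sub>R sgd_iter g lam x0 xi k)
             in h xbar + lam / 2 * (norm xbar)\<^sup>2) - fstar)
          \<partial>(PiM {..T} (\<lambda>_. D)))
         \<le> ennreal (24 * L\<^sup>2 / (lam * (real T + 2))
                    + 36 * lam * (norm (x0 - xstar))\<^sup>2 / ((real T + 1) * (real T + 2)))"
proof -
  have mG: "g x \<in> borel_measurable D" for x
  proof -
    have "Pair x \<in> measurable D (borel \<Otimes>\<^sub>M D)" by simp
    from measurable_compose[OF this g_meas] show ?thesis by simp
  qed
  have subL: "\<exists>s \<in> subdifferential h x. norm s \<le> \<bar>L\<bar>" for x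
    using g_unbiased mean_facts(4)[OF D_prob mG g_second_moment[rule_format]] by blast
  have us: "norm (lam *\<^sub>R xstar) \<le> \<bar>L\<bar>"
    by (rule xstar_bound[OF subL xstar_min lam_pos])
  have hm: "h \<in> borel_measurable borel"
    by (rule borel_measurable_continuous_onI, rule lipschitz_on_continuous_on[OF lip])
  define W where "W = (real T + 1) * (real T + 2)"
  have W0: "W > 0" unfolding W_def by (simp add: add_pos_nonneg)
  let ?X = "\<lambda>xi k. sgd_iter g lam x0 xi k"
  let ?Q = "Qpot h g lam x0 xstar (Suc T)"
  define \<phi> where "\<phi> x = h x + lam / 2 * (norm x)\<^sup>2" for x
  have cphi: "convex_on UNIV \<phi>" unfolding \<phi>_def
    using cvx convex_norm2 lam_pos by (intro convex_on_add convex_on_cmul) auto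
  have Q0: "0 \<le> ?Q xi" for xi
  proof -
    have "0 \<le> Fobj h lam xstar x" for x using xstar_min by (simp add: Fobj_def)
    then show ?thesis unfolding Qpot_def using lam_pos
      by (intro add_nonneg_nonneg mult_nonneg_nonneg sum_nonneg) auto
  qed
  have pt: "(let xbar = (2 / ((real T + 1) * (real T + 2))) *\<^sub>R
                        (\<Sum>k\<le>T. (real k + 1) *\<^sub>R ?X xi k)
             in h xbar + lam / 2 * (norm xbar)\<^sup>2) - fstar \<le> ?Q xi / W" for xi
  proof -
    define w where "w k = 2 * (real k + 1) / W" for k
    have xb: "(2 / ((real T + 1) * (real T + 2))) *\<^sub>R (\<Sum>k\<le>T. (real k + 1) *\<^sub>R ?X xi k)
        = (\<Sum>k\<le>T. w k *\<^sub>R ?X xi k)"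
      unfolding w_def W_def scaleR_sum_right by (simp add: mult.commute)
    have sw: "(\<Sum>k\<le>T. w k) = 1"
    proof -
      have "(\<Sum>k\<le>T. w k) = (2 * (\<Sum>k\<le>T. real k + 1)) / W"
        unfolding w_def sum_divide_distrib[symmetric] sum_distrib_left[symmetric] ..
      also have "\<dots> = 1" unfolding sum_k1 using W0 unfolding W_def by simp
      finally show ?thesis .
    qed
    have "\<phi> (\<Sum>k\<le>T. w k *\<^sub>R ?X xi k) \<le> (\<Sum>k\<le>T. w k * \<phi> (?X xi k))"
      by (rule convex_on_sum[OF _ _ cphi sw]) (use W0 in \<open>auto simp: w_def\<close>)
    hence "\<phi> (\<Sum>k\<le>T. w k *\<^sub>R ?X xi k) - fstar \<le> (\<Sum>k\<le>T. w k * (\<phi> (?X xi k) - fstar))"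
      using sw by (simp add: right_diff_distrib sum_subtractf sum_distrib_right[symmetric])
    also have "\<dots> = (\<Sum>k<Suc T. 2*(real k+1) * Fobj h lam xstar (?X xi k)) / W"
      unfolding w_def Fobj_def \<phi>_def fstar_def lessThan_Suc_atMost sum_divide_distrib
      by (intro sum.cong) auto
    also have "\<dots> \<le> ?Q xi / W"
      using W0 lam_pos by (intro divide_right_mono) (auto simp: Qpot_def)
    finally show ?thesis unfolding xb Let_def \<phi>_def .
  qed
  have mQ: "?Q \<in> borel_measurable (PiM {..T} (\<lambda>_. D))"
    by (rule Q_meas[OF g_meas hm]) auto
  have "(\<integral>\<^sup>+ xi. ennreal (
            (let xbar = (2 / ((real T + 1) * (real T + 2))) *\<^sub>R
                        (\<Sum>k\<le>T. (real k + 1) *\<^sub>R sgd_iter g lam x0 xi k)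
             in h xbar + lam / 2 * (norm xbar)\<^sup>2) - fstar)
          \<partial>(PiM {..T} (\<lambda>_. D)))
      \<le> (\<integral>\<^sup>+ xi. ennreal (?Q xi) * ennreal (1/W) \<partial>(PiM {..T} (\<lambda>_. D)))"
    using pt W0 by (intro nn_integral_mono) (simp add: ennreal_mult[symmetric] ennreal_leI Q0)
  also have "\<dots> = (\<integral>\<^sup>+ xi. ennreal (?Q xi) \<partial>(PiM {..T} (\<lambda>_. D))) * ennreal (1/W)"
    using mQ by (simp add: nn_integral_multc)
  also have "\<dots> \<le> ennreal (36*lam*(norm (x0-xstar))\<^sup>2 + real (Suc T) * (16*L\<^sup>2/lam)) * ennreal (1/W)"
    using main_ind[OF D_prob g_meas hm g_unbiased g_second_moment us lam_pos xstar_min, where n="Suc T"]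
    unfolding lessThan_Suc_atMost by (rule mult_right_mono) simp
  also have "\<dots> = ennreal ((36*lam*(norm (x0-xstar))\<^sup>2 + real (Suc T) * (16*L\<^sup>2/lam)) / W)"
    using W0 lam_pos by (subst ennreal_mult[symmetric]) (auto intro!: add_nonneg_nonneg)
  also have "\<dots> \<le> ennreal (24 * L\<^sup>2 / (lam * (real T + 2))
                    + 36 * lam * (norm (x0 - xstar))\<^sup>2 / ((real T + 1) * (real T + 2)))"
  proof (rule ennreal_leI)
    have a: "real (Suc T) * (16*L\<^sup>2/lam) / W = 16 * L\<^sup>2 / (lam * (real T + 2))"
    proof -
      have t1: "real T + 1 \<noteq> 0" by linarith
      have "real (Suc T) * (16*L\<^sup>2/lam) / W = (real T + 1) * (16*L\<^sup>2/lam) / ((real T + 1) * (real T + 2))"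
        unfolding W_def by (simp only: of_nat_Suc add.commute[of 1 "real T"])
      also have "\<dots> = (16*L\<^sup>2/lam) / (real T + 2)"
        by (rule mult_divide_mult_cancel_left[OF t1])
      also have "\<dots> = 16 * L\<^sup>2 / (lam * (real T + 2))" by (simp add: divide_divide_eq_left)
      finally show ?thesis .
    qed
    have b: "16 * L\<^sup>2 / (lam * (real T + 2)) \<le> 24 * L\<^sup>2 / (lam * (real T + 2))"
      using lam_pos by (intro divide_right_mono) auto
    show "(36*lam*(norm (x0-xstar))\<^sup>2 + real (Suc T) * (16*L\<^sup>2/lam)) / W
        \<le> 24 * L\<^sup>2 / (lam * (real T + 2)) + 36 * lam * (norm (x0 - xstar))\<^sup>2 / ((real T + 1) * (real T + 2))"
    proof -
      have e: "(36*lam*(norm (x0-xstar))\<^sup>2 + real (Suc T) * (16*L\<^sup>2/lam)) / W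
          = 36*lam*(norm (x0-xstar))\<^sup>2 / W + 16 * L\<^sup>2 / (lam * (real T + 2))"
        unfolding add_divide_distrib a ..
      show ?thesis unfolding e using b unfolding W_def by linarith
    qed
  qed
  finally show ?thesis .
qed

end
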